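(* Let $\xi>0$ be such that $D^TD-\xi^2I$ is nonsingular, let $N$ be a positive integer and let the mesh $\Omega_N=\{\theta_{N,i}: i=-N,\dots,N\}$ satisfy $\theta_{N,-i}=-\theta_{N,i}$ for $i=1,\dots,N$. Then for all $\lambda\in\mathbb{C}$, $\det(\lambda I-\mathcal{L}_\xi^N)=0$ if and only if $\det(-\bar\lambda I-\mathcal{L}_\xi^N)=0$.
   Context: Let $n,m,n_u,n_y$ be positive integers, $A_0,\dots,A_m\in\mathbb{R}^{n\times n}$, $B\in\mathbb{R}^{n\times n_u}$, $C\in\mathbb{R}^{n_y\times n}$, $D\in\mathbb{R}^{n_y\times n_u}$, delays $\tau_1,\dots,\tau_m\ge0$, $\tau_{\max}=\max_i\tau_i>0$. For $\xi>0$ put $D_\xi=D^TD-\xi^2I_{n_u}$, $\tilde D_\xi=DD^T-\xi^2I_{n_y}$, and define $2n\times2n$ matrices $M_0=\begin{bmatrix} A_0-BD_\xi^{-1}D^TC & -BD_\xi^{-1}B^T\\ \xi^2 C^T\tilde D_\xi^{-1}C & -A_0^T+C^TDD_\xi^{-1}B^T\end{bmatrix}$, $M_i=\begin{bmatrix}A_i&0\\0&0\end{bmatrix}$, $M_{-i}=\begin{bmatrix}0&0\\0&-A_i^T\end{bmatrix}$, $1\le i\le m$. A mesh $\Omega_N$ consists of $2N+1$ points $-\tau_{\max}\le\theta_{N,-N}<\dots<\theta_{N,0}=0<\dots<\theta_{N,N}\le\tau_{\max}$. Let $X_N=(\mathbb{C}^{2n})^{2N+1}$ with elements $x=(x_{-N},\dots,x_N)$,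 and let $\mathcal{P}_Nx$ be the unique $\mathbb{C}^{2n}$-valued polynomial of degree $\le 2N$ with $\mathcal{P}_Nx(\theta_{N,i})=x_i$ for all $i$. The matrix $\mathcal{L}_\xi^N:X_N\to X_N$ is defined by $(\mathcal{L}_\xi^Nx)_i=(\mathcal{P}_Nx)'(\theta_{N,i})$ for $i\ne0$ and $(\mathcal{L}_\xi^Nx)_0=M_0\mathcal{P}_Nx(0)+\sum_{i=1}^m\left(M_i\mathcal{P}_Nx(-\tau_i)+M_{-i}\mathcal{P}_Nx(\tau_i)\right)$. *)

theory Defs
  imports "Jordan_Normal_Form.Determinant" "Jordan_Normal_Form.Gauss_Jordan_Elimination"
    "HOL-Computational_Algebra.Polynomial"
begin

definition minv :: "real mat \<Rightarrow> real mat" where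
  "minv X = the (mat_inverse X)"

definition Dxi :: "real mat \<Rightarrow> real \<Rightarrow> real mat" where
  "Dxi D \<xi> = transpose_mat D * D - (\<xi>^2) \<cdot>\<^sub>m 1\<^sub>m (dim_col D)"

definition Dtxi :: "real mat \<Rightarrow> real \<Rightarrow> real mat" where
  "Dtxi D \<xi> = D * transpose_mat D - (\<xi>^2) \<cdot>\<^sub>m 1\<^sub>m (dim_row D)"

definition M0 :: "real mat \<Rightarrow> real mat \<Rightarrow> real mat \<Rightarrow> real mat \<Rightarrow> real \<Rightarrow> real mat" where
  "M0 A0 B C D \<xi> = four_block_mat
     (A0 - B * minv (Dxi D \<xi>) * transpose_mat D * C)
     (- (B * minv (Dxi D \<xi>) * transpose_mat B))
     ((\<xi>^2) \<cdot>\<^sub>m (transpose_mat C * minv (Dtxi D \<xi>) * C))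
     (- transpose_mat A0 + transpose_mat C * D * minv (Dxi D \<xi>) * transpose_mat B)"

definition Mplus :: "real mat \<Rightarrow> real mat" where
  "Mplus Ai = four_block_mat Ai (0\<^sub>m (dim_row Ai) (dim_row Ai))
                 (0\<^sub>m (dim_row Ai) (dim_row Ai)) (0\<^sub>m (dim_row Ai) (dim_row Ai))"

definition Mminus :: "real mat \<Rightarrow> real mat" where
  "Mminus Ai = four_block_mat (0\<^sub>m (dim_row Ai) (dim_row Ai)) (0\<^sub>m (dim_row Ai) (dim_row Ai))
                 (0\<^sub>m (dim_row Ai) (dim_row Ai)) (- transpose_mat Ai)"

(* Elements x of X_N = (C^{2n})^{2N+1} are represented as functions x i c,
   block index i in {-N..N}, component c < 2n.
   interp N theta x c is the c-th component of P_N x: the unique polynomial of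
   degree <= 2N interpolating the c-th components at the mesh points. *)
definition interp :: "nat \<Rightarrow> (int \<Rightarrow> real) \<Rightarrow> (int \<Rightarrow> nat \<Rightarrow> complex) \<Rightarrow> nat \<Rightarrow> complex poly" where
  "interp N \<theta> x c = (THE p. degree p \<le> 2 * N \<and>
       (\<forall>i\<in>{- int N..int N}. poly p (complex_of_real (\<theta> i)) = x i c))"

definition Lop :: "nat \<Rightarrow> nat \<Rightarrow> (nat \<Rightarrow> real mat) \<Rightarrow> real mat \<Rightarrow> real mat \<Rightarrow> real mat
      \<Rightarrow> (nat \<Rightarrow> real) \<Rightarrow> real \<Rightarrow> nat \<Rightarrow> (int \<Rightarrow> real)
      \<Rightarrow> (int \<Rightarrow> nat \<Rightarrow> complex) \<Rightarrow> (int \<Rightarrow> nat \<Rightarrow> complex)" where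
  "Lop n m A B C D \<tau> \<xi> N \<theta> x i c =
     (let P = (\<lambda>d t. poly (interp N \<theta> x d) (complex_of_real t)) in
      if i \<noteq> 0 then poly (pderiv (interp N \<theta> x c)) (complex_of_real (\<theta> i))
      else (\<Sum>d<2*n. complex_of_real (M0 (A 0) B C D \<xi> $$ (c, d)) * P d 0)
         + (\<Sum>k\<in>{1..m}. \<Sum>d<2*n.
              complex_of_real (Mplus (A k) $$ (c, d)) * P d (- \<tau> k)
            + complex_of_real (Mminus (A k) $$ (c, d)) * P d (\<tau> k)))"

(* Coordinates: row/column index r < (2N+1)*2n corresponds to block
   i = r div (2n) - N and component r mod (2n). *)
definition blk :: "nat \<Rightarrow> nat \<Rightarrow> nat \<Rightarrow> int" where
  "blk n N r = int (r div (2*n)) - int N"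

definition unitX :: "nat \<Rightarrow> nat \<Rightarrow> nat \<Rightarrow> (int \<Rightarrow> nat \<Rightarrow> complex)" where
  "unitX n N s = (\<lambda>i c. if i = blk n N s \<and> c = s mod (2*n) then 1 else 0)"

definition LN :: "nat \<Rightarrow> nat \<Rightarrow> (nat \<Rightarrow> real mat) \<Rightarrow> real mat \<Rightarrow> real mat \<Rightarrow> real mat
      \<Rightarrow> (nat \<Rightarrow> real) \<Rightarrow> real \<Rightarrow> nat \<Rightarrow> (int \<Rightarrow> real) \<Rightarrow> complex mat" where
  "LN n m A B C D \<tau> \<xi> N \<theta> =
     mat ((2*N+1)*(2*n)) ((2*N+1)*(2*n))
       (\<lambda>(r, s). Lop n m A B C D \<tau> \<xi> N \<theta> (unitX n N s) (blk n N r) (r mod (2*n)))"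

end

theory Submission
  imports Defs
begin


lemma lagrange_exists:
  fixes t :: "'i \<Rightarrow> complex" and v :: "'i \<Rightarrow> complex"
  assumes fin: "finite I" and inj: "inj_on t I"
  shows "\<exists>p. degree p \<le> card I - 1 \<and> (\<forall>i\<in>I. poly p (t i) = v i)"
proof -
  define L where "L j = (\<Prod>k\<in>I-{j}. [:- t k, 1:])" for j
  have degL: "degree (L j) \<le> card I - 1" if "j \<in> I" for j
  proof -
    have "degree (L j) \<le> sum (degree \<circ> (\<lambda>k. [:- t k, 1:])) (I - {j})"
      unfolding L_def by (rule degree_prod_sum_le) (use fin in auto)
    also have "\<dots> = card (I - {j})" by simp
    also have "\<dots> = card I - 1" using that fin by simp
    finally show ?thesis .
  qed
  have Lval: "poly (L j) (t i) = (\<Prod>k\<in>I-{j}. t i - t k)" for i j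
    unfolding L_def by (simp add: poly_prod)
  have Lz: "poly (L j) (t i) = 0" if "i \<in> I" "j \<in> I" "i \<noteq> j" for i j
    unfolding Lval using that fin by (auto intro!: prod_zero)
  have Lnz: "poly (L j) (t j) \<noteq> 0" if "j \<in> I" for j
    unfolding Lval using that fin inj by (auto simp: inj_on_def)
  define p where "p = (\<Sum>j\<in>I. smult (v j / poly (L j) (t j)) (L j))"
  have "degree p \<le> card I - 1"
    unfolding p_def by (rule degree_sum_le[OF fin]) (meson degL degree_smult_le order_trans)
  moreover have "poly p (t i) = v i" if "i \<in> I" for i
  proof -
    have "poly p (t i) = (\<Sum>j\<in>I. v j / poly (L j) (t j) * poly (L j) (t i))"
      unfolding p_def by (simp add: poly_sum)
    also have "\<dots> = v i / poly (L i) (t i) * poly (L i) (t i)"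
      by (rule sum.remove[OF fin that, THEN trans]) (auto intro!: sum.neutral simp: Lz[OF that] eq_commute[of i])
    also have "\<dots> = v i" using Lnz[OF that] by simp
    finally show ?thesis .
  qed
  ultimately show ?thesis by blast
qed

definition MONO :: "nat \<Rightarrow> (int \<Rightarrow> real) \<Rightarrow> bool" where
  "MONO N \<theta> \<longleftrightarrow> (\<forall>i\<in>{- int N..int N}. \<forall>j\<in>{- int N..int N}. i < j \<longrightarrow> \<theta> i < \<theta> j)"

lemma mono_inj:
  assumes "MONO N \<theta>"
  shows "inj_on (\<lambda>i. complex_of_real (\<theta> i)) {- int N..int N}"
proof (rule inj_onI)
  fix i j assume ij: "i \<in> {- int N..int N}" "j \<in> {- int N..int N}"
    and e: "complex_of_real (\<theta> i) = complex_of_real (\<theta> j)"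
  hence "\<theta> i = \<theta> j" by simp
  with assms ij show "i = j" unfolding MONO_def
    by (metis less_irrefl linorder_neqE)
qed

lemma card_I: "card {- int N..int N} = 2 * N + 1" by simp

lemma interp_spec:
  assumes "MONO N \<theta>"
  shows "degree (interp N \<theta> x c) \<le> 2 * N \<and>
     (\<forall>i\<in>{- int N..int N}. poly (interp N \<theta> x c) (complex_of_real (\<theta> i)) = x i c)"
proof -
  let ?I = "{- int N..int N}"
  let ?P = "\<lambda>p. degree p \<le> 2 * N \<and> (\<forall>i\<in>?I. poly p (complex_of_real (\<theta> i)) = x i c)"
  obtain p where p: "degree p \<le> card ?I - 1" "\<forall>i\<in>?I. poly p (complex_of_real (\<theta> i)) = x i c"
    using lagrange_exists[OF _ mono_inj[OF assms], of "\<lambda>i. x i c"] by auto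
  have "?P p" using p by simp
  moreover have "q = p" if "?P q" for q
  proof (rule poly_eqI_degree[where A = "(\<lambda>i. complex_of_real (\<theta> i)) ` ?I"])
    show "poly q z = poly p z" if "z \<in> (\<lambda>i. complex_of_real (\<theta> i)) ` ?I" for z
      using that \<open>?P q\<close> p by auto
    have "card ((\<lambda>i. complex_of_real (\<theta> i)) ` ?I) = 2 * N + 1"
      using card_image[OF mono_inj[OF assms]] by simp
    thus "degree q < card ((\<lambda>i. complex_of_real (\<theta> i)) ` ?I)"
         "degree p < card ((\<lambda>i. complex_of_real (\<theta> i)) ` ?I)" using \<open>?P q\<close> p by auto
  qed
  ultimately have "?P (THE p. ?P p)" by (rule theI)
  thus ?thesis unfolding interp_def .
qed

lemma interp_unique:
  assumes "MONO N \<theta>" "degree p \<le> 2 * N"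
    "\<forall>i\<in>{- int N..int N}. poly p (complex_of_real (\<theta> i)) = x i c"
  shows "interp N \<theta> x c = p"
proof -
  let ?I = "{- int N..int N}"
  have s: "degree (interp N \<theta> x c) \<le> 2 * N" "\<forall>i\<in>?I. poly (interp N \<theta> x c) (complex_of_real (\<theta> i)) = x i c"
    using interp_spec[OF assms(1)] by auto
  show ?thesis
  proof (rule poly_eqI_degree[where A = "(\<lambda>i. complex_of_real (\<theta> i)) ` ?I"])
    show "poly (interp N \<theta> x c) z = poly p z" if "z \<in> (\<lambda>i. complex_of_real (\<theta> i)) ` ?I" for z
      using that s assms by auto
    have "card ((\<lambda>i. complex_of_real (\<theta> i)) ` ?I) = 2 * N + 1"
      using card_image[OF mono_inj[OF assms(1)]] by simp
    thus "degree (interp N \<theta> x c) < card ((\<lambda>i. complex_of_real (\<theta> i)) ` ?I)"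
         "degree p < card ((\<lambda>i. complex_of_real (\<theta> i)) ` ?I)" using s assms by auto
  qed
qed


definition ridx :: "nat \<Rightarrow> nat \<Rightarrow> int \<Rightarrow> nat \<Rightarrow> nat" where
  "ridx n N i c = nat (i + int N) * (2*n) + c"

lemma ridx_props:
  assumes "n > 0" "i \<in> {- int N..int N}" "c < 2*n"
  shows "ridx n N i c < (2*N+1)*(2*n)" "blk n N (ridx n N i c) = i" "ridx n N i c mod (2*n) = c"
proof -
  have h: "nat (i + int N) \<le> 2*N" using assms by auto
  have "nat (i + int N) * (2*n) + c < 2*N*(2*n) + 2*n"
    using mult_le_mono1[OF h, of "2*n"] assms(3) by linarith
  thus "ridx n N i c < (2*N+1)*(2*n)" unfolding ridx_def by (simp add: algebra_simps)
  show "ridx n N i c mod (2*n) = c" unfolding ridx_def using assms by simp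
  have "ridx n N i c div (2*n) = nat (i + int N)" unfolding ridx_def using assms by simp
  thus "blk n N (ridx n N i c) = i" unfolding blk_def using assms by simp
qed

lemma blk_props:
  assumes "n > 0" "r < (2*N+1)*(2*n)"
  shows "blk n N r \<in> {- int N..int N}" "ridx n N (blk n N r) (r mod (2*n)) = r"
    "r mod (2*n) < 2*n"
proof -
  have "r div (2*n) < 2*N+1" using assms by (simp add: less_mult_imp_div_less)
  thus "blk n N r \<in> {- int N..int N}" unfolding blk_def by auto
  show "ridx n N (blk n N r) (r mod (2*n)) = r" unfolding ridx_def blk_def
    using div_mult_mod_eq[of r "2*n"] by simp
  show "r mod (2*n) < 2*n" using assms by simp
qed

lemma unit_sum:
  assumes "n > 0" "i \<in> {- int N..int N}" "c < 2*n"
  shows "(\<Sum>s<(2*N+1)*(2*n). w s * unitX n N s i c) = w (ridx n N i c)"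
proof -
  have "(\<Sum>s<(2*N+1)*(2*n). w s * unitX n N s i c)
      = (\<Sum>s<(2*N+1)*(2*n). if s = ridx n N i c then w s else 0)"
  proof (rule sum.cong[OF refl])
    fix s assume s: "s \<in> {..<(2*N+1)*(2*n)}"
    have "(i = blk n N s \<and> c = s mod (2*n)) \<longleftrightarrow> s = ridx n N i c"
      using ridx_props[OF assms] blk_props[OF assms(1), of s] s by auto
    thus "w s * unitX n N s i c = (if s = ridx n N i c then w s else 0)"
      unfolding unitX_def by auto
  qed
  also have "\<dots> = w (ridx n N i c)" using ridx_props[OF assms] by simp
  finally show ?thesis .
qed

lemma pderiv_sum: "pderiv (sum f A) = (\<Sum>x\<in>A. pderiv (f x))"
  using higher_pderiv_sum[of 1 f A] by simp

lemma interp_lin: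
  assumes mono: "MONO N \<theta>" and n: "n > 0" and c: "c < 2*n"
    and x: "\<forall>i\<in>{- int N..int N}. x i c = w (ridx n N i c)"
  shows "interp N \<theta> x c = (\<Sum>s<(2*N+1)*(2*n). smult (w s) (interp N \<theta> (unitX n N s) c))"
proof (rule interp_unique[OF mono])
  show "degree (\<Sum>s<(2*N+1)*(2*n). smult (w s) (interp N \<theta> (unitX n N s) c)) \<le> 2 * N"
    by (rule degree_sum_le) (auto intro: order_trans[OF degree_smult_le] simp: interp_spec[OF mono])
  show "\<forall>i\<in>{- int N..int N}. poly (\<Sum>s<(2*N+1)*(2*n). smult (w s) (interp N \<theta> (unitX n N s) c))
      (complex_of_real (\<theta> i)) = x i c"
    using interp_spec[OF mono] unit_sum[OF n _ c] x by (simp add: poly_sum)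
qed

lemma Lop_lin:
  assumes mono: "MONO N \<theta>" and n: "n > 0" and c: "c < 2*n"
    and x: "\<forall>i\<in>{- int N..int N}. \<forall>c<2*n. x i c = w (ridx n N i c)"
  shows "Lop n m A B C D \<tau> \<xi> N \<theta> x i c
     = (\<Sum>s<(2*N+1)*(2*n). w s * Lop n m A B C D \<tau> \<xi> N \<theta> (unitX n N s) i c)"
proof -
  let ?S = "{..<(2*N+1)*(2*n)}"
  let ?P = "\<lambda>s d t. poly (interp N \<theta> (unitX n N s) d) (complex_of_real t)"
  have ip: "poly (interp N \<theta> x d) z = (\<Sum>s\<in>?S. w s * poly (interp N \<theta> (unitX n N s) d) z)" if "d < 2*n" for d z
  proof -
    have "\<forall>i\<in>{- int N..int N}. x i d = w (ridx n N i d)" using x that by auto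
    from interp_lin[OF mono n that, of x w, OF this] show ?thesis by (simp add: poly_sum)
  qed
  show ?thesis
  proof (cases "i = 0")
    case False
    have "\<forall>i\<in>{- int N..int N}. x i c = w (ridx n N i c)" using x c by auto
    from interp_lin[OF mono n c, of x w, OF this] False show ?thesis unfolding Lop_def Let_def
      by (simp add: poly_sum pderiv_sum pderiv_smult)
  next
    case True
    have "Lop n m A B C D \<tau> \<xi> N \<theta> x i c =
      (\<Sum>d<2*n. complex_of_real (M0 (A 0) B C D \<xi> $$ (c, d)) * (\<Sum>s\<in>?S. w s * ?P s d 0))
         + (\<Sum>k\<in>{1..m}. \<Sum>d<2*n.
              complex_of_real (Mplus (A k) $$ (c, d)) * (\<Sum>s\<in>?S. w s * ?P s d (- \<tau> k))
            + complex_of_real (Mminus (A k) $$ (c, d)) * (\<Sum>s\<in>?S. w s * ?P s d (\<tau> k)))"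
      unfolding Lop_def Let_def using True by (simp add: ip)
    also have "\<dots> = (\<Sum>s\<in>?S. w s * Lop n m A B C D \<tau> \<xi> N \<theta> (unitX n N s) i c)"
      unfolding Lop_def Let_def using True
      apply (simp add: sum_distrib_left sum.distrib distrib_left mult.left_commute
          sum.swap[of _ ?S] sum.swap[of _ "{..<2*n}"])
      by (rule arg_cong2[where f="(+)"]; rule sum.cong[OF refl]; rule sum.swap)
    finally show ?thesis .
  qed
qed

lemma LN_mult:
  assumes mono: "MONO N \<theta>" and n: "n > 0" and v: "v \<in> carrier_vec ((2*N+1)*(2*n))"
    and r: "r < (2*N+1)*(2*n)"
  shows "(LN n m A B C D \<tau> \<xi> N \<theta> *\<^sub>v v) $ r
    = Lop n m A B C D \<tau> \<xi> N \<theta> (\<lambda>i c. v $ ridx n N i c) (blk n N r) (r mod (2*n))"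
proof -
  have "(LN n m A B C D \<tau> \<xi> N \<theta> *\<^sub>v v) $ r
     = (\<Sum>s<(2*N+1)*(2*n). Lop n m A B C D \<tau> \<xi> N \<theta> (unitX n N s) (blk n N r) (r mod (2*n)) * v $ s)"
    using v r unfolding LN_def by (simp add: scalar_prod_def atLeast0LessThan)
  also have "\<dots> = Lop n m A B C D \<tau> \<xi> N \<theta> (\<lambda>i c. v $ ridx n N i c) (blk n N r) (r mod (2*n))"
    by (subst Lop_lin[OF mono n, where w = "\<lambda>s. v $ s"]) (use n in \<open>auto simp: mult.commute\<close>)
  finally show ?thesis .
qed


definition Eig :: "nat \<Rightarrow> nat \<Rightarrow> (nat \<Rightarrow> real mat) \<Rightarrow> real mat \<Rightarrow> real mat \<Rightarrow> real mat
      \<Rightarrow> (nat \<Rightarrow> real) \<Rightarrow> real \<Rightarrow> nat \<Rightarrow> (int \<Rightarrow> real) \<Rightarrow> complex \<Rightarrow> bool" where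
  "Eig n m A B C D \<tau> \<xi> N \<theta> z \<longleftrightarrow> (\<exists>x. (\<exists>i\<in>{- int N..int N}. \<exists>c<2*n. x i c \<noteq> 0) \<and>
     (\<forall>i\<in>{- int N..int N}. \<forall>c<2*n. Lop n m A B C D \<tau> \<xi> N \<theta> x i c = z * x i c))"

lemma det_iff_Eig:
  assumes mono: "MONO N \<theta>" and n: "n > 0"
  shows "det (z \<cdot>\<^sub>m 1\<^sub>m ((2*N+1)*(2*n)) - LN n m A B C D \<tau> \<xi> N \<theta>) = 0
     \<longleftrightarrow> Eig n m A B C D \<tau> \<xi> N \<theta> z"
proof -
  let ?K = "(2*N+1)*(2*n)"
  let ?L = "LN n m A B C D \<tau> \<xi> N \<theta>"
  let ?Lop = "Lop n m A B C D \<tau> \<xi> N \<theta>"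
  have Lc: "?L \<in> carrier_mat ?K ?K" unfolding LN_def by simp
  have Mc: "z \<cdot>\<^sub>m 1\<^sub>m ?K - ?L \<in> carrier_mat ?K ?K" using Lc by (intro minus_carrier_mat) auto
  have mv: "(z \<cdot>\<^sub>m 1\<^sub>m ?K - ?L) *\<^sub>v v = 0\<^sub>v ?K \<longleftrightarrow> (\<forall>r<?K. (?L *\<^sub>v v) $ r = z * v $ r)"
    if v: "v \<in> carrier_vec ?K" for v
  proof -
    have e: "((z \<cdot>\<^sub>m 1\<^sub>m ?K - ?L) *\<^sub>v v) $ r = z * v $ r - (?L *\<^sub>v v) $ r" if "r < ?K" for r
    proof -
      have "(z \<cdot>\<^sub>m 1\<^sub>m ?K - ?L) *\<^sub>v v = (z \<cdot>\<^sub>m 1\<^sub>m ?K) *\<^sub>v v - ?L *\<^sub>v v"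
        using Lc v by (intro minus_mult_distrib_mat_vec) auto
      moreover have "((z \<cdot>\<^sub>m 1\<^sub>m ?K) *\<^sub>v v) $ r = z * v $ r"
      proof -
        have "((z \<cdot>\<^sub>m 1\<^sub>m ?K) *\<^sub>v v) $ r = (\<Sum>j<?K. (if r = j then z else 0) * v $ j)"
          using that v by (auto simp: scalar_prod_def atLeast0LessThan intro!: sum.cong)
        also have "\<dots> = (\<Sum>j<?K. if r = j then z * v $ j else 0)" by (rule sum.cong) auto
        also have "\<dots> = z * v $ r" using that by simp
        finally show ?thesis .
      qed
      ultimately show ?thesis using that v Lc by simp
    qed
    show ?thesis
    proof
      assume "(z \<cdot>\<^sub>m 1\<^sub>m ?K - ?L) *\<^sub>v v = 0\<^sub>v ?K"
      thus "\<forall>r<?K. (?L *\<^sub>v v) $ r = z * v $ r" using e by (metis eq_iff_diff_eq_0 index_zero_vec(1))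
    next
      assume "\<forall>r<?K. (?L *\<^sub>v v) $ r = z * v $ r"
      thus "(z \<cdot>\<^sub>m 1\<^sub>m ?K - ?L) *\<^sub>v v = 0\<^sub>v ?K" using e Lc v by (intro eq_vecI) auto
    qed
  qed
  show ?thesis
  proof
    assume "det (z \<cdot>\<^sub>m 1\<^sub>m ?K - ?L) = 0"
    then obtain v where v: "v \<in> carrier_vec ?K" "v \<noteq> 0\<^sub>v ?K" "(z \<cdot>\<^sub>m 1\<^sub>m ?K - ?L) *\<^sub>v v = 0\<^sub>v ?K"
      using det_0_iff_vec_prod_zero[OF Mc] by auto
    have ev: "\<forall>r<?K. (?L *\<^sub>v v) $ r = z * v $ r" using mv v by auto
    define x where "x i c = v $ ridx n N i c" for i c
    have "?Lop x i c = z * x i c" if "i \<in> {- int N..int N}" "c < 2*n" for i c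
      using ev[rule_format, OF ridx_props(1)[OF n that]] LN_mult[OF mono n v(1) ridx_props(1)[OF n that]]
        ridx_props[OF n that] unfolding x_def by simp
    moreover obtain r where r: "r < ?K" "v $ r \<noteq> 0" using v(1,2) by (metis eq_vecI carrier_vecD index_zero_vec)
    hence "x (blk n N r) (r mod (2*n)) \<noteq> 0" unfolding x_def using blk_props[OF n r(1)] by simp
    ultimately show "Eig n m A B C D \<tau> \<xi> N \<theta> z" unfolding Eig_def using blk_props[OF n r(1)] by blast
  next
    assume "Eig n m A B C D \<tau> \<xi> N \<theta> z"
    then obtain x where x0: "\<exists>i\<in>{- int N..int N}. \<exists>c<2*n. x i c \<noteq> 0"
      and ev: "\<forall>i\<in>{- int N..int N}. \<forall>c<2*n. ?Lop x i c = z * x i c" unfolding Eig_def by blast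
    define v where "v = vec ?K (\<lambda>r. x (blk n N r) (r mod (2*n)))"
    have vc: "v \<in> carrier_vec ?K" unfolding v_def by simp
    have vx: "\<forall>i\<in>{- int N..int N}. \<forall>c<2*n. x i c = v $ ridx n N i c"
      unfolding v_def using ridx_props[OF n] by simp
    have "(?L *\<^sub>v v) $ r = z * v $ r" if r: "r < ?K" for r
    proof -
      have "(?L *\<^sub>v v) $ r = ?Lop (\<lambda>i c. v $ ridx n N i c) (blk n N r) (r mod (2*n))"
        by (rule LN_mult[OF mono n vc r])
      also have "\<dots> = (\<Sum>s<?K. v $ s * ?Lop (unitX n N s) (blk n N r) (r mod (2*n)))"
        by (rule Lop_lin[OF mono n blk_props(3)[OF n r]]) simp
      also have "\<dots> = ?Lop x (blk n N r) (r mod (2*n))"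
        by (rule Lop_lin[OF mono n blk_props(3)[OF n r], symmetric]) (use vx in simp)
      also have "\<dots> = z * v $ r" using ev blk_props[OF n r] r unfolding v_def by simp
      finally show ?thesis .
    qed
    hence "(z \<cdot>\<^sub>m 1\<^sub>m ?K - ?L) *\<^sub>v v = 0\<^sub>v ?K" using mv[OF vc] by simp
    moreover have "v \<noteq> 0\<^sub>v ?K"
    proof
      assume "v = 0\<^sub>v ?K"
      with vx have "\<forall>i\<in>{- int N..int N}. \<forall>c<2*n. x i c = 0" using ridx_props[OF n] by simp
      with x0 show False by blast
    qed
    ultimately show "det (z \<cdot>\<^sub>m 1\<^sub>m ?K - ?L) = 0"
      using det_0_iff_vec_prod_zero[OF Mc] vc by auto
  qed
qed


lemma pderiv_map_cnj: "pderiv (map_poly cnj p) = map_poly cnj (pderiv p)"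
  by (rule poly_eqI) (simp add: coeff_pderiv coeff_map_poly)

lemma poly_map_cnj: "poly (map_poly cnj p) z = cnj (poly p (cnj z))"
  using poly_cnj[of p "cnj z"] by simp

lemma interp_cnj:
  assumes mono: "MONO N \<theta>"
  shows "interp N \<theta> (\<lambda>i c. cnj (x i c)) d = map_poly cnj (interp N \<theta> x d)"
  by (rule interp_unique[OF mono])
    (use interp_spec[OF mono, of x d] in \<open>auto simp: poly_map_cnj degree_map_poly\<close>)

lemma Lop_cnj:
  assumes mono: "MONO N \<theta>"
  shows "Lop n m A B C D \<tau> \<xi> N \<theta> (\<lambda>i c. cnj (x i c)) i c = cnj (Lop n m A B C D \<tau> \<xi> N \<theta> x i c)"
  unfolding Lop_def Let_def interp_cnj[OF mono]
  by (simp add: poly_map_cnj pderiv_map_cnj cnj_sum)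

lemma Eig_cnj:
  assumes mono: "MONO N \<theta>" and e: "Eig n m A B C D \<tau> \<xi> N \<theta> z"
  shows "Eig n m A B C D \<tau> \<xi> N \<theta> (cnj z)"
proof -
  obtain x where x0: "\<exists>i\<in>{- int N..int N}. \<exists>c<2*n. x i c \<noteq> 0"
      and ev: "\<forall>i\<in>{- int N..int N}. \<forall>c<2*n. Lop n m A B C D \<tau> \<xi> N \<theta> x i c = z * x i c"
    using e unfolding Eig_def by blast
  show ?thesis unfolding Eig_def
    by (rule exI[of _ "\<lambda>i c. cnj (x i c)"]) (use x0 ev in \<open>auto simp: Lop_cnj[OF mono]\<close>)
qed



lemma minv_props:
  fixes X :: "real mat"
  assumes X: "X \<in> carrier_mat k k" and sym: "transpose_mat X = X" and d: "det X \<noteq> 0"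
  shows "minv X \<in> carrier_mat k k" "X * minv X = 1\<^sub>m k" "minv X * X = 1\<^sub>m k"
    "transpose_mat (minv X) = minv X"
proof -
  obtain Bi where Bi: "mat_inverse X = Some Bi"
  proof (cases "mat_inverse X")
    case None
    from mat_inverse(1)[OF X None, of "()"] det_non_zero_imp_unit[OF X d, where b="()"] show ?thesis by blast
  qed auto
  from mat_inverse(2)[OF X Bi] have B: "X * Bi = 1\<^sub>m k" "Bi * X = 1\<^sub>m k" "Bi \<in> carrier_mat k k" by auto
  have m: "minv X = Bi" unfolding minv_def Bi by simp
  show "minv X \<in> carrier_mat k k" "X * minv X = 1\<^sub>m k" "minv X * X = 1\<^sub>m k" using B m by auto
  have "X * transpose_mat Bi = transpose_mat (Bi * X)"
    using transpose_mult[OF B(3) X] sym by simp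
  also have "\<dots> = 1\<^sub>m k" using B by simp
  finally have XBt: "X * transpose_mat Bi = 1\<^sub>m k" .
  have "Bi = Bi * (X * transpose_mat Bi)" using XBt B by simp
  also have "\<dots> = (Bi * X) * transpose_mat Bi" using B X by (simp add: assoc_mult_mat[symmetric, of Bi k k X k])
  also have "\<dots> = transpose_mat Bi" using B by simp
  finally show "transpose_mat (minv X) = minv X" using m by simp
qed

lemma Dxi_carrier: "D \<in> carrier_mat ny nu \<Longrightarrow> Dxi D \<xi> \<in> carrier_mat nu nu"
  unfolding Dxi_def by auto

lemma Dtxi_carrier: "D \<in> carrier_mat ny nu \<Longrightarrow> Dtxi D \<xi> \<in> carrier_mat ny ny"
  unfolding Dtxi_def by auto

lemma Dxi_sym: "D \<in> carrier_mat ny nu \<Longrightarrow> transpose_mat (Dxi D \<xi>) = Dxi D \<xi>"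
  unfolding Dxi_def by (intro eq_matI) (auto simp: comm_scalar_prod[of _ ny])

lemma Dtxi_sym: "D \<in> carrier_mat ny nu \<Longrightarrow> transpose_mat (Dtxi D \<xi>) = Dtxi D \<xi>"
  unfolding Dtxi_def by (intro eq_matI) (auto simp: comm_scalar_prod[of _ nu])

lemma Dtxi_det:
  assumes D: "D \<in> carrier_mat ny nu" and xi: "\<xi> \<noteq> 0" and d: "det (Dxi D \<xi>) \<noteq> 0"
  shows "det (Dtxi D \<xi>) \<noteq> 0"
proof
  assume "det (Dtxi D \<xi>) = 0"
  then obtain v where v: "v \<in> carrier_vec ny" "v \<noteq> 0\<^sub>v ny" "Dtxi D \<xi> *\<^sub>v v = 0\<^sub>v ny"
    using det_0_iff_vec_prod_zero[OF Dtxi_carrier[OF D]] by auto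
  define u where "u = transpose_mat D *\<^sub>v v"
  have u: "u \<in> carrier_vec nu" unfolding u_def using D v by auto
  have "Dtxi D \<xi> *\<^sub>v v = (D * transpose_mat D) *\<^sub>v v - ((\<xi>^2) \<cdot>\<^sub>m 1\<^sub>m ny) *\<^sub>v v"
    unfolding Dtxi_def carrier_matD(1)[OF D] using D v by (intro minus_mult_distrib_mat_vec) auto
  also have "\<dots> = D *\<^sub>v u - (\<xi>^2) \<cdot>\<^sub>v v" unfolding u_def using D v by auto
  finally have Du: "D *\<^sub>v u = (\<xi>^2) \<cdot>\<^sub>v v" using v D u
    by (metis carrier_vecD eq_vecI index_minus_vec(1) index_minus_vec(2) index_zero_vec(1) index_zero_vec(2) index_smult_vec(2) mult_mat_vec_carrier right_minus_eq)
  have "Dxi D \<xi> *\<^sub>v u = (transpose_mat D * D) *\<^sub>v u - ((\<xi>^2) \<cdot>\<^sub>m 1\<^sub>m nu) *\<^sub>v u"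
    unfolding Dxi_def carrier_matD(2)[OF D] using D u by (intro minus_mult_distrib_mat_vec) auto
  also have "\<dots> = transpose_mat D *\<^sub>v (D *\<^sub>v u) - (\<xi>^2) \<cdot>\<^sub>v u" using D u by auto
  also have "transpose_mat D *\<^sub>v (D *\<^sub>v u) = (\<xi>^2) \<cdot>\<^sub>v u"
  proof -
    have "transpose_mat D *\<^sub>v (D *\<^sub>v u) = transpose_mat D *\<^sub>v ((\<xi>^2) \<cdot>\<^sub>v v)" by (simp only: Du)
    also have "\<dots> = (\<xi>^2) \<cdot>\<^sub>v u" unfolding u_def using D v by (intro mult_mat_vec) auto
    finally show ?thesis .
  qed
  finally have "Dxi D \<xi> *\<^sub>v u = 0\<^sub>v nu" using u by auto
  moreover have "u \<noteq> 0\<^sub>v nu"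
  proof
    assume "u = 0\<^sub>v nu"
    have "D *\<^sub>v 0\<^sub>v nu = 0\<^sub>v ny" using D by (intro eq_vecI) (auto simp: scalar_prod_def)
    hence "(\<xi>^2) \<cdot>\<^sub>v v = 0\<^sub>v ny" using Du \<open>u = 0\<^sub>v nu\<close> by simp
    hence "v = 0\<^sub>v ny" using xi v(1)
    proof (intro eq_vecI)
      fix i assume "(\<xi>^2) \<cdot>\<^sub>v v = 0\<^sub>v ny" "i < dim_vec (0\<^sub>v ny :: real vec)"
      hence "((\<xi>^2) \<cdot>\<^sub>v v) $ i = 0" by simp
      thus "v $ i = 0\<^sub>v ny $ i" using xi v(1) \<open>i < _\<close> by simp
    qed (use v(1) in auto)
    with v(2) show False by simp
  qed
  ultimately have "det (Dxi D \<xi>) = 0" using det_0_iff_vec_prod_zero[OF Dxi_carrier[OF D]] u by auto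
  with d show False by simp
qed


definition sg :: "nat \<Rightarrow> nat \<Rightarrow> real" where "sg n c = (if c < n then -1 else 1)"
definition sw :: "nat \<Rightarrow> nat \<Rightarrow> nat" where "sw n c = (if c < n then c + n else c - n)"

lemma fb_ham:
  assumes X: "X \<in> carrier_mat n n" and Y: "Y \<in> carrier_mat n n" and Z: "Z \<in> carrier_mat n n"
    and W: "W \<in> carrier_mat n n"
    and Ys: "\<And>i j. i < n \<Longrightarrow> j < n \<Longrightarrow> Y $$ (i,j) = Y $$ (j,i)"
    and Zs: "\<And>i j. i < n \<Longrightarrow> j < n \<Longrightarrow> Z $$ (i,j) = Z $$ (j,i)"
    and WX: "\<And>i j. i < n \<Longrightarrow> j < n \<Longrightarrow> W $$ (i,j) = - X $$ (j,i)"
    and c: "c < 2*n" and d: "d < 2*n"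
  shows "sg n c * sg n d * four_block_mat X Y Z W $$ (sw n d, sw n c) = - four_block_mat X Y Z W $$ (c,d)"
  using X Y Z W c d Ys[of c "d-n"] Ys[of "d - n" c] Zs[of "c-n" d] Zs[of d "c-n"] WX[of d c] WX[of "c-n" "d-n"]
  by (auto simp: sg_def sw_def)

lemma Mpm_ham:
  assumes A: "A \<in> carrier_mat n n" and c: "c < 2*n" and d: "d < 2*n"
  shows "sg n c * sg n d * Mplus A $$ (sw n d, sw n c) = - Mminus A $$ (c,d)"
    "sg n c * sg n d * Mminus A $$ (sw n d, sw n c) = - Mplus A $$ (c,d)"
  using A c d unfolding Mplus_def Mminus_def by (auto simp: sg_def sw_def)

lemma sym_entry: "Y \<in> carrier_mat n n \<Longrightarrow> transpose_mat Y = Y \<Longrightarrow> i < n \<Longrightarrow> j < n \<Longrightarrow> Y $$ (i,j) = Y $$ (j,i)"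
  by (metis carrier_matD index_transpose_mat(1))

lemma transpose3:
  fixes A M :: "'a::comm_ring_1 mat"
  assumes A: "A \<in> carrier_mat a b" and M: "M \<in> carrier_mat b b" and s: "transpose_mat M = M"
  shows "transpose_mat (A * M * transpose_mat A) = A * M * transpose_mat A"
proof -
  have "transpose_mat (A * M * transpose_mat A) = transpose_mat (transpose_mat A) * transpose_mat (A * M)"
    by (rule transpose_mult[of _ a b]) (use A M in auto)
  also have "transpose_mat (A * M) = transpose_mat M * transpose_mat A"
    by (rule transpose_mult) (use A M in auto)
  finally show ?thesis using A M s by (simp add: assoc_mult_mat[of _ a b])
qed

lemma transpose4:
  fixes B Di D C :: "'a::comm_ring_1 mat"
  assumes B: "B \<in> carrier_mat n nu" and C: "C \<in> carrier_mat ny n" and D: "D \<in> carrier_mat ny nu"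
    and M: "Di \<in> carrier_mat nu nu" and s: "transpose_mat Di = Di"
  shows "transpose_mat (B * Di * transpose_mat D * C) = transpose_mat C * D * Di * transpose_mat B"
proof -
  have "transpose_mat (B * Di * transpose_mat D * C) = transpose_mat C * transpose_mat (B * Di * transpose_mat D)"
    by (rule transpose_mult[of _ n ny]) (use B C D M in auto)
  also have "transpose_mat (B * Di * transpose_mat D) = transpose_mat (transpose_mat D) * transpose_mat (B * Di)"
    by (rule transpose_mult[of _ n nu]) (use B C D M in auto)
  also have "transpose_mat (B * Di) = transpose_mat Di * transpose_mat B"
    by (rule transpose_mult) (use B M in auto)
  finally have e: "transpose_mat (B * Di * transpose_mat D * C) = transpose_mat C * (D * (Di * transpose_mat B))"
    using B C D M s by (simp add: assoc_mult_mat[of _ n ny] assoc_mult_mat[of _ ny nu] assoc_mult_mat[of _ n nu])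
  have "transpose_mat C * D * Di * transpose_mat B = (transpose_mat C * D) * (Di * transpose_mat B)"
    by (rule assoc_mult_mat[of _ n nu _ nu _ n]) (use B C D M in auto)
  also have "\<dots> = transpose_mat C * (D * (Di * transpose_mat B))"
    by (rule assoc_mult_mat[of _ n ny _ nu _ n]) (use B C D M in auto)
  finally show ?thesis using e by simp
qed

lemma M0_ham:
  assumes A0: "A0 \<in> carrier_mat n n" and B: "B \<in> carrier_mat n nu" and C: "C \<in> carrier_mat ny n"
    and D: "D \<in> carrier_mat ny nu" and xi: "\<xi> \<noteq> 0" and det: "det (Dxi D \<xi>) \<noteq> 0"
    and c: "c < 2*n" and d: "d < 2*n"
  shows "sg n c * sg n d * M0 A0 B C D \<xi> $$ (sw n d, sw n c) = - M0 A0 B C D \<xi> $$ (c,d)"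
proof -
  define Di where "Di = minv (Dxi D \<xi>)"
  define Dti where "Dti = minv (Dtxi D \<xi>)"
  note Dp = minv_props[OF Dxi_carrier[OF D] Dxi_sym[OF D] det, folded Di_def]
  note Dtp = minv_props[OF Dtxi_carrier[OF D] Dtxi_sym[OF D] Dtxi_det[OF D xi det], folded Dti_def]
  let ?X = "A0 - B * Di * transpose_mat D * C"
  let ?Y = "- (B * Di * transpose_mat B)"
  let ?Z = "(\<xi>^2) \<cdot>\<^sub>m (transpose_mat C * Dti * C)"
  let ?W = "- transpose_mat A0 + transpose_mat C * D * Di * transpose_mat B"
  have X: "?X \<in> carrier_mat n n" using A0 B C D Dp by auto
  have Y: "?Y \<in> carrier_mat n n" using A0 B C D Dp by auto
  have Z: "?Z \<in> carrier_mat n n" using A0 B C D Dtp by auto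
  have W: "?W \<in> carrier_mat n n" using A0 B C D Dp by auto
  have tY: "transpose_mat (B * Di * transpose_mat B) = B * Di * transpose_mat B"
    using transpose3[OF B Dp(1) Dp(4)] .
  have tZ: "transpose_mat (transpose_mat C * Dti * C) = transpose_mat C * Dti * C"
    using transpose3[OF _ Dtp(1) Dtp(4), of "transpose_mat C" n] C by simp
  have tX: "transpose_mat (B * Di * transpose_mat D * C) = transpose_mat C * D * Di * transpose_mat B"
    by (rule transpose4[OF B C D Dp(1) Dp(4)])
  have Ys: "?Y $$ (i,j) = ?Y $$ (j,i)" if "i < n" "j < n" for i j
    using sym_entry[OF _ tY, of n i j] that B Dp by auto
  have Zs: "?Z $$ (i,j) = ?Z $$ (j,i)" if "i < n" "j < n" for i j
    using sym_entry[OF _ tZ, of n i j] that C Dtp by auto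
  have WX: "?W $$ (i,j) = - ?X $$ (j,i)" if "i < n" "j < n" for i j
  proof -
    have "(transpose_mat C * D * Di * transpose_mat B) $$ (i,j) = (B * Di * transpose_mat D * C) $$ (j,i)"
      using arg_cong[OF tX, of "\<lambda>M. M $$ (i,j)"] that B C D Dp by simp
    thus ?thesis using that A0 B C D Dp by simp
  qed
  show ?thesis unfolding M0_def Di_def[symmetric] Dti_def[symmetric]
    by (rule fb_ham[OF X Y Z W Ys Zs WX c d])
qed



lemma pderiv_smult_zero:
  fixes g :: "complex poly"
  assumes e: "pderiv g = smult z g" and z: "z \<noteq> 0"
  shows "g = 0"
proof (rule ccontr)
  assume g: "g \<noteq> 0"
  show False
  proof (cases "degree g = 0")
    case True
    then obtain c where "g = [:c:]" by (rule degree_eq_zeroE)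
    hence "smult z g = 0" using e by (simp add: pderiv_pCons)
    with g z show False by simp
  next
    case False
    have "degree (pderiv g) = degree g - 1" by (rule degree_pderiv)
    moreover have "degree (smult z g) = degree g" using z by simp
    ultimately show False using e False by simp
  qed
qed

lemma row0_sum:
  fixes a :: "nat \<Rightarrow> complex"
  assumes c: "c < k"
  shows "(\<Sum>d<k. ((if c = d then Z0 else 0) - al d * G0
            - (\<Sum>j\<in>S. be j d * Gm j + ga j d * Gp j)) * a d)
       = Z0 * a c - ((\<Sum>d<k. al d * (a d * G0))
            + (\<Sum>j\<in>S. \<Sum>d<k. be j d * (a d * Gm j) + ga j d * (a d * Gp j)))"
proof -
  have "(\<Sum>d<k. ((if c = d then Z0 else 0) - al d * G0
            - (\<Sum>j\<in>S. be j d * Gm j + ga j d * Gp j)) * a d)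
      = (\<Sum>d<k. (if c = d then Z0 * a d else 0)) - (\<Sum>d<k. al d * (a d * G0))
        - (\<Sum>d<k. \<Sum>j\<in>S. be j d * (a d * Gm j) + ga j d * (a d * Gp j))"
  proof -
    have "\<And>d. ((if c = d then Z0 else 0) - al d * G0
            - (\<Sum>j\<in>S. be j d * Gm j + ga j d * Gp j)) * a d
          = (if c = d then Z0 * a d else 0) - al d * (a d * G0)
            - (\<Sum>j\<in>S. be j d * (a d * Gm j) + ga j d * (a d * Gp j))"
      by (simp add: algebra_simps sum_distrib_right sum_distrib_left sum.distrib)
    thus ?thesis by (simp add: sum_subtractf)
  qed
  also have "(\<Sum>d<k. (if c = d then Z0 * a d else 0)) = Z0 * a c" using c by simp
  also have "(\<Sum>d<k. \<Sum>j\<in>S. be j d * (a d * Gm j) + ga j d * (a d * Gp j))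
      = (\<Sum>j\<in>S. \<Sum>d<k. be j d * (a d * Gm j) + ga j d * (a d * Gp j))" by (rule sum.swap)
  finally show ?thesis by simp
qed


lemma Lop0: "Lop n m A B C D \<tau> \<xi> N \<theta> x 0 c =
   (\<Sum>d<2*n. complex_of_real (M0 (A 0) B C D \<xi> $$ (c, d)) * poly (interp N \<theta> x d) 0)
   + (\<Sum>k\<in>{1..m}. \<Sum>d<2*n.
        complex_of_real (Mplus (A k) $$ (c, d)) * poly (interp N \<theta> x d) (- complex_of_real (\<tau> k))
      + complex_of_real (Mminus (A k) $$ (c, d)) * poly (interp N \<theta> x d) (complex_of_real (\<tau> k)))"
  by (simp add: Lop_def)

lemma LopK: "i \<noteq> 0 \<Longrightarrow> Lop n m A B C D \<tau> \<xi> N \<theta> x i c =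
   poly (pderiv (interp N \<theta> x c)) (complex_of_real (\<theta> i))"
  by (simp add: Lop_def)

lemma sw_props:
  assumes "c < 2*n"
  shows "sw n c < 2*n" "sw n (sw n c) = c" "sg n (sw n c) = - sg n c" "sg n c * sg n c = 1"
  using assms by (auto simp: sw_def sg_def)

lemma sum_sw: "(\<Sum>d<2*n. h (sw n d)) = (\<Sum>e<2*n. h e)"
proof (rule sum.reindex_bij_witness[where i="sw n" and j="sw n"])
qed (auto simp: sw_props)

lemma theta_neg:
  fixes \<theta> :: "int \<Rightarrow> real"
  assumes "\<theta> 0 = 0" "\<forall>i\<in>{1..int N}. \<theta> (- i) = - \<theta> i" "i \<in> {- int N..int N}"
  shows "\<theta> (- i) = - \<theta> i"
proof -
  consider "i = 0" | "i > 0" | "i < 0" by linarith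
  thus ?thesis
  proof cases
    case 3
    hence "- i \<in> {1..int N}" using assms(3) by auto
    hence "\<theta> (- (- i)) = - \<theta> (- i)" using assms(2) by blast
    hence h: "\<theta> i = - \<theta> (- i)" by simp
    show ?thesis using h by linarith
  qed (use assms in auto)
qed

lemma Eig_neg:
  assumes mono: "MONO N \<theta>" and n: "n > 0" and th0: "\<theta> 0 = 0"
    and thsym: "\<forall>i\<in>{1..int N}. \<theta> (- i) = - \<theta> i"
    and H0: "\<And>c d. c < 2*n \<Longrightarrow> d < 2*n \<Longrightarrow>
       sg n c * sg n d * M0 (A 0) B C D \<xi> $$ (sw n d, sw n c) = - M0 (A 0) B C D \<xi> $$ (c,d)"
    and HP: "\<And>k c d. k \<in> {1..m} \<Longrightarrow> c < 2*n \<Longrightarrow> d < 2*n \<Longrightarrow>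
       sg n c * sg n d * Mplus (A k) $$ (sw n d, sw n c) = - Mminus (A k) $$ (c,d)"
    and HM: "\<And>k c d. k \<in> {1..m} \<Longrightarrow> c < 2*n \<Longrightarrow> d < 2*n \<Longrightarrow>
       sg n c * sg n d * Mminus (A k) $$ (sw n d, sw n c) = - Mplus (A k) $$ (c,d)"
    and z: "z \<noteq> 0"
    and e: "Eig n m A B C D \<tau> \<xi> N \<theta> z"
  shows "Eig n m A B C D \<tau> \<xi> N \<theta> (- z)"
proof -
  let ?I = "{- int N..int N}"
  let ?K = "?I - {0}"
  let ?t = "\<lambda>i. complex_of_real (\<theta> i)"
  let ?Lop = "Lop n m A B C D \<tau> \<xi> N \<theta>"
  let ?ML0 = "\<lambda>c d. complex_of_real (M0 (A 0) B C D \<xi> $$ (c, d))"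
  let ?MP = "\<lambda>k c d. complex_of_real (Mplus (A k) $$ (c, d))"
  let ?MM = "\<lambda>k c d. complex_of_real (Mminus (A k) $$ (c, d))"
  obtain x where x0: "\<exists>i\<in>?I. \<exists>c<2*n. x i c \<noteq> 0"
      and ev: "\<forall>i\<in>?I. \<forall>c<2*n. ?Lop x i c = z * x i c"
    using e unfolding Eig_def by blast
  define p where "p c = interp N \<theta> x c" for c
  have pspec: "degree (p c) \<le> 2*N" "\<And>i. i \<in> ?I \<Longrightarrow> poly (p c) (?t i) = x i c" for c
    using interp_spec[OF mono, of x c] unfolding p_def by auto
  have injI: "inj_on ?t ?I" by (rule mono_inj[OF mono])
  have cardK: "card (?t ` ?K) = 2*N"
    using card_image[OF inj_on_subset[OF injI, of ?K]] by auto
  have cardI: "card (?t ` ?I) = 2*N+1"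
    using card_image[OF injI] by auto
  have pd: "poly (pderiv (p c)) (?t i) = z * poly (p c) (?t i)" if "i \<in> ?K" "c < 2*n" for i c
    using ev that LopK[of i n m A B C D \<tau> \<xi> N \<theta> x c] pspec(2)[of i c] unfolding p_def by auto
  define \<omega> where "\<omega> = (\<Prod>i\<in>?K. [:- ?t i, 1:])"
  have \<omega>deg: "degree \<omega> = 2*N"
  proof -
    have "degree \<omega> = (\<Sum>i\<in>?K. degree [:- ?t i, 1:])"
      unfolding \<omega>_def by (rule degree_prod_sum_eq) simp
    also have "\<dots> = card ?K" by simp
    also have "\<dots> = 2*N" by simp
    finally show ?thesis .
  qed
  have \<omega>lc: "coeff \<omega> (2*N) = 1"
  proof -
    have "lead_coeff \<omega> = 1" unfolding \<omega>_def lead_coeff_prod by simp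
    thus ?thesis using \<omega>deg by simp
  qed
  have \<omega>nz: "\<omega> \<noteq> 0" using \<omega>lc by auto
  have \<omega>root: "poly \<omega> (?t i) = 0" if "i \<in> ?K" for i
    unfolding \<omega>_def poly_prod using that by (auto intro!: prod_zero)
  define r where "r c = pderiv (p c) - smult z (p c)" for c
  define a where "a c = coeff (r c) (2*N)" for c
  have rdeg: "degree (r c) \<le> 2*N" for c
    unfolding r_def
    by (rule degree_diff_le) (use pspec(1)[of c] degree_pderiv[of "p c"] degree_smult_le[of z "p c"] in auto)
  have req: "r c = smult (a c) \<omega>" if c: "c < 2*n" for c
  proof (rule poly_eqI_degree_lead_coeff[where n = "2*N" and A = "?t ` ?K"])
    show "coeff (r c) (2*N) = coeff (smult (a c) \<omega>) (2*N)" using \<omega>lc unfolding a_def by simp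
    show "2*N \<le> card (?t ` ?K)" using cardK by simp
    show "degree (r c) \<le> 2*N" by (rule rdeg)
    show "degree (smult (a c) \<omega>) \<le> 2*N" using \<omega>deg degree_smult_le[of "a c" \<omega>] by simp
    show "poly (r c) w = poly (smult (a c) \<omega>) w" if "w \<in> ?t ` ?K" for w
    proof -
      from that obtain i where i: "i \<in> ?K" "w = ?t i" by blast
      show ?thesis using pd[OF i(1) c] \<omega>root[OF i(1)] i(2) unfolding r_def by simp
    qed
  qed
  obtain c0 where c0: "c0 < 2*n" "a c0 \<noteq> 0"
  proof (rule ccontr)
    assume "\<not> thesis"
    hence a0: "\<And>c. c < 2*n \<Longrightarrow> a c = 0" using that by blast
    have "p c = 0" if "c < 2*n" for c
      using pderiv_smult_zero[OF _ z, of "p c"] req[OF that] a0[OF that] unfolding r_def by simp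
    hence "x i c = 0" if "i \<in> ?I" "c < 2*n" for i c using pspec(2)[OF that(1), of c] that by simp
    with x0 show False by blast
  qed
  define f where "f = smult (inverse (a c0)) (p c0)"
  have feq: "pderiv f - smult z f = \<omega>"
  proof -
    have "pderiv f - smult z f = smult (inverse (a c0)) (r c0)"
      unfolding f_def r_def by (simp add: pderiv_smult smult_diff_right mult.commute)
    also have "\<dots> = \<omega>" using req[OF c0(1)] c0(2) by simp
    finally show ?thesis .
  qed
  have fdeg: "degree f \<le> 2*N" unfolding f_def using pspec(1)[of c0] degree_smult_le order_trans by blast
  have peq: "p c = smult (a c) f" if c: "c < 2*n" for c
  proof -
    define g where "g = p c - smult (a c) f"
    have "pderiv g - smult z g = r c - smult (a c) (pderiv f - smult z f)"
      unfolding g_def r_def by (simp add: pderiv_diff pderiv_smult smult_diff_right algebra_simps)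
    also have "\<dots> = 0" using req[OF c] feq by simp
    finally have "g = 0" using pderiv_smult_zero[OF _ z, of g] by simp
    thus ?thesis unfolding g_def by simp
  qed
  define F0 where "F0 = poly f 0"
  define Fm where "Fm k = poly f (- complex_of_real (\<tau> k))" for k
  define Fp where "Fp k = poly f (complex_of_real (\<tau> k))" for k
  define Hm where "Hm c d = (if c = d then z * F0 else 0) - ?ML0 c d * F0
      - (\<Sum>k\<in>{1..m}. ?MP k c d * Fm k + ?MM k c d * Fp k)" for c d
  have Hrow: "(\<Sum>d<2*n. Hm c d * a d) = 0" if c: "c < 2*n" for c
  proof -
    have "(\<Sum>d<2*n. Hm c d * a d) = z * F0 * a c - ?Lop x 0 c"
      unfolding Hm_def Lop0 row0_sum[OF c] p_def[symmetric]
      by (rule arg_cong2[where f = "\<lambda>u v. u - v"], simp,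
          rule arg_cong2[where f = "(+)"]; intro sum.cong refl; simp add: peq F0_def Fm_def Fp_def algebra_simps)
    also have "?Lop x 0 c = z * x 0 c" using ev c by auto
    also have "x 0 c = poly (p c) 0" using pspec(2)[of 0 c] th0 by simp
    also have "\<dots> = a c * F0" using peq[OF c] unfolding F0_def by simp
    finally show ?thesis by simp
  qed
  define Hmat where "Hmat = mat (2*n) (2*n) (\<lambda>(c,d). Hm c d)"
  have Hc: "Hmat \<in> carrier_mat (2*n) (2*n)" unfolding Hmat_def by simp
  have "det Hmat = 0"
  proof -
    let ?v = "vec (2*n) a"
    have "?v \<in> carrier_vec (2*n)" by simp
    moreover have "?v \<noteq> 0\<^sub>v (2*n)"
    proof
      assume "?v = 0\<^sub>v (2*n)"
      hence "?v $ c0 = 0" using c0 by simp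
      with c0 show False by simp
    qed
    moreover have "Hmat *\<^sub>v ?v = 0\<^sub>v (2*n)"
    proof (rule eq_vecI)
      fix c assume "c < dim_vec (0\<^sub>v (2*n) :: complex vec)"
      hence c: "c < 2*n" by simp
      have "(Hmat *\<^sub>v ?v) $ c = (\<Sum>d<2*n. Hm c d * a d)"
        using c unfolding Hmat_def by (simp add: scalar_prod_def atLeast0LessThan)
      thus "(Hmat *\<^sub>v ?v) $ c = 0\<^sub>v (2*n) $ c" using Hrow[OF c] c by simp
    qed (simp add: Hmat_def)
    ultimately show ?thesis using det_0_iff_vec_prod_zero[OF Hc] by blast
  qed
  hence "det (transpose_mat Hmat) = 0" using det_transpose[OF Hc] by simp
  then obtain b' where b': "b' \<in> carrier_vec (2*n)" "b' \<noteq> 0\<^sub>v (2*n)" "transpose_mat Hmat *\<^sub>v b' = 0\<^sub>v (2*n)"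
    using det_0_iff_vec_prod_zero[of "transpose_mat Hmat" "2*n"] Hc by auto
  have Hcol: "(\<Sum>c<2*n. Hm c d * b' $ c) = 0" if d: "d < 2*n" for d
  proof -
    have "(transpose_mat Hmat *\<^sub>v b') $ d = (\<Sum>c<2*n. Hm c d * b' $ c)"
      using d b'(1) unfolding Hmat_def by (simp add: scalar_prod_def atLeast0LessThan)
    thus ?thesis using b'(3) d by simp
  qed
  define g where "g = - pcompose f [:0, -1:]"
  have gpoly: "poly g w = - poly f (- w)" for w by (simp add: g_def poly_pcompose)
  have fder: "poly (pderiv f) u = z * poly f u + poly \<omega> u" for u
    using arg_cong[OF feq, of "\<lambda>q. poly q u"] by (simp add: algebra_simps)
  have gder: "poly (pderiv g) w = - z * poly g w + poly \<omega> (- w)" for w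
  proof -
    have "pderiv g = - (pcompose (pderiv f) [:0, -1:] * [:-1:])"
      by (simp add: g_def pderiv_minus pderiv_pcompose pderiv_pCons)
    hence "poly (pderiv g) w = poly (pderiv f) (- w)" by (simp add: poly_pcompose)
    thus ?thesis using fder gpoly by simp
  qed
  have gdeg: "degree g \<le> 2*N" using fdeg by (simp add: g_def degree_pcompose)
  have gnz: "g \<noteq> 0"
  proof
    assume "g = 0"
    hence "poly f u = 0" for u using gpoly[of "- u"] by simp
    hence "f = 0" using poly_eq_poly_eq_iff[of f 0] by auto
    with feq \<omega>nz show False by simp
  qed
  obtain i0 where i0: "i0 \<in> ?I" "poly g (?t i0) \<noteq> 0"
  proof (rule ccontr)
    assume "\<not> thesis"
    hence "\<forall>i\<in>?I. poly g (?t i) = 0" using that by blast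
    hence "g = 0"
      by (intro poly_eqI_degree[of "?t ` ?I" g 0]) (use cardI gdeg in auto)
    with gnz show False by simp
  qed
  define b where "b d = complex_of_real (sg n d) * b' $ (sw n d)" for d
  define y where "y i c = b c * poly g (?t i)" for i c
  obtain e0 where e0: "e0 < 2*n" "b' $ e0 \<noteq> 0"
    using b'(1,2) by (metis eq_vecI carrier_vecD index_zero_vec)
  have bnz: "b (sw n e0) \<noteq> 0"
    unfolding b_def using sw_props[OF e0(1)] e0(2) by (auto simp: sg_def)
  have yint: "interp N \<theta> y c = smult (b c) g" for c
    by (rule interp_unique[OF mono]) (use gdeg degree_smult_le[of "b c" g] in \<open>auto simp: y_def\<close>)
  have sgc: "complex_of_real (sg n c) * complex_of_real (sg n c) = 1" for c
    by (simp add: sg_def)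
  define G0 where "G0 = poly g 0"
  define Gm where "Gm k = poly g (- complex_of_real (\<tau> k))" for k
  define Gp where "Gp k = poly g (complex_of_real (\<tau> k))" for k
  define H2 where "H2 c d = (if c = d then - z * G0 else 0) - ?ML0 c d * G0
      - (\<Sum>k\<in>{1..m}. ?MP k c d * Gm k + ?MM k c d * Gp k)" for c d
  have H2eq: "H2 c d = complex_of_real (sg n c) * complex_of_real (sg n d) * Hm (sw n d) (sw n c)"
    if c: "c < 2*n" and d: "d < 2*n" for c d
  proof -
    let ?s = "complex_of_real (sg n c) * complex_of_real (sg n d)"
    have hx0: "?s * ?ML0 (sw n d) (sw n c) = - ?ML0 c d"
      using arg_cong[OF H0[OF c d], of complex_of_real] by simp
    have hxp: "?s * ?MP k (sw n d) (sw n c) = - ?MM k c d" if "k \<in> {1..m}" for k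
      using arg_cong[OF HP[OF that c d], of complex_of_real] by simp
    have hxm: "?s * ?MM k (sw n d) (sw n c) = - ?MP k c d" if "k \<in> {1..m}" for k
      using arg_cong[OF HM[OF that c d], of complex_of_real] by simp
    have hd: "?s * (if sw n d = sw n c then z * F0 else 0) = (if c = d then z * F0 else 0)"
      using sw_props[OF c] sw_props[OF d] sgc[of c] by (auto simp: sg_def)
    have "?s * Hm (sw n d) (sw n c) = ?s * (if sw n d = sw n c then z * F0 else 0)
        - (?s * ?ML0 (sw n d) (sw n c)) * F0
        - (\<Sum>k\<in>{1..m}. (?s * ?MP k (sw n d) (sw n c)) * Fm k + (?s * ?MM k (sw n d) (sw n c)) * Fp k)"
      unfolding Hm_def by (simp add: right_diff_distrib sum_distrib_left distrib_left mult.assoc)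
    also have "\<dots> = (if c = d then z * F0 else 0) + ?ML0 c d * F0
        + (\<Sum>k\<in>{1..m}. ?MM k c d * Fm k + ?MP k c d * Fp k)"
    proof -
      have "(\<Sum>k\<in>{1..m}. (?s * ?MP k (sw n d) (sw n c)) * Fm k + (?s * ?MM k (sw n d) (sw n c)) * Fp k)
          = - (\<Sum>k\<in>{1..m}. ?MM k c d * Fm k + ?MP k c d * Fp k)"
        unfolding sum_negf[symmetric] by (rule sum.cong[OF refl]) (simp only: hxp hxm, simp)
      thus ?thesis unfolding hd hx0 by simp
    qed
    also have "\<dots> = H2 c d"
    proof -
      have S: "(\<Sum>k\<in>{1..m}. ?MP k c d * Gm k + ?MM k c d * Gp k)
          = - (\<Sum>k\<in>{1..m}. ?MM k c d * Fm k + ?MP k c d * Fp k)"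
        unfolding sum_negf[symmetric] Gm_def Gp_def gpoly Fm_def Fp_def
        by (rule sum.cong[OF refl]) (simp add: algebra_simps)
      show ?thesis unfolding H2_def S G0_def gpoly F0_def by simp
    qed
    finally show ?thesis by simp
  qed
  have H2row: "(\<Sum>d<2*n. H2 c d * b d) = 0" if c: "c < 2*n" for c
  proof -
    have "(\<Sum>d<2*n. H2 c d * b d) = (\<Sum>d<2*n. complex_of_real (sg n c) * (Hm (sw n d) (sw n c) * b' $ (sw n d)))"
    proof (rule sum.cong[OF refl])
      fix d assume "d \<in> {..<2*n}"
      hence d: "d < 2*n" by simp
      show "H2 c d * b d = complex_of_real (sg n c) * (Hm (sw n d) (sw n c) * b' $ (sw n d))"
        unfolding H2eq[OF c d] b_def using sgc[of d]
        by (simp add: algebra_simps)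
    qed
    also have "\<dots> = complex_of_real (sg n c) * (\<Sum>d<2*n. Hm (sw n d) (sw n c) * b' $ (sw n d))"
      by (simp add: sum_distrib_left)
    also have "(\<Sum>d<2*n. Hm (sw n d) (sw n c) * b' $ (sw n d)) = (\<Sum>e<2*n. Hm e (sw n c) * b' $ e)"
      by (rule sum_sw)
    also have "\<dots> = 0" by (rule Hcol[OF sw_props(1)[OF c]])
    finally show ?thesis by simp
  qed
  have yev: "?Lop y i c = - z * y i c" if i: "i \<in> ?I" and c: "c < 2*n" for i c
  proof (cases "i = 0")
    case True
    have "(\<Sum>d<2*n. H2 c d * b d) = (- z * G0) * b c - ?Lop y 0 c"
      unfolding H2_def Lop0 row0_sum[OF c] yint
      by (rule arg_cong2[where f = "\<lambda>u v. u - v"], simp,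
          rule arg_cong2[where f = "(+)"]; intro sum.cong refl; simp add: G0_def Gm_def Gp_def algebra_simps)
    hence "?Lop y 0 c = - z * G0 * b c" using H2row[OF c] by simp
    thus ?thesis using True th0 unfolding y_def G0_def by simp
  next
    case False
    hence iK: "i \<in> ?K" "- i \<in> ?K" using i by auto
    have "?Lop y i c = b c * poly (pderiv g) (?t i)"
      using LopK[OF False] yint by (simp add: pderiv_smult)
    also have "\<dots> = b c * (- z * poly g (?t i) + poly \<omega> (?t (- i)))"
      unfolding gder theta_neg[OF th0 thsym i] by simp
    also have "\<dots> = - z * y i c" using \<omega>root[OF iK(2)] unfolding y_def by simp
    finally show ?thesis .
  qed
  show ?thesis unfolding Eig_def
  proof (intro exI conjI)
    show "\<exists>i\<in>?I. \<exists>c<2*n. y i c \<noteq> 0"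
      using i0 bnz sw_props(1)[OF e0(1)] unfolding y_def by auto
    show "\<forall>i\<in>?I. \<forall>c<2*n. ?Lop y i c = - z * y i c" using yev by blast
  qed
qed


theorem proposition2:
  fixes n m nu ny N :: nat
    and A :: "nat \<Rightarrow> real mat" and B C D :: "real mat"
    and \<tau> :: "nat \<Rightarrow> real" and \<xi> :: real and \<theta> :: "int \<Rightarrow> real"
  assumes "n > 0" "m > 0" "nu > 0" "ny > 0"
    and "\<forall>k\<le>m. A k \<in> carrier_mat n n"
    and "B \<in> carrier_mat n nu" "C \<in> carrier_mat ny n" "D \<in> carrier_mat ny nu"
    and "\<forall>k\<in>{1..m}. \<tau> k \<ge> 0"
    and "Max (\<tau> ` {1..m}) > 0"
    and "\<xi> > 0"
    and "det (Dxi D \<xi>) \<noteq> 0"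
    and "N > 0"
    and "\<forall>i\<in>{- int N..int N}. \<forall>j\<in>{- int N..int N}. i < j \<longrightarrow> \<theta> i < \<theta> j"
    and "\<theta> 0 = 0"
    and "- Max (\<tau> ` {1..m}) \<le> \<theta> (- int N)" "\<theta> (int N) \<le> Max (\<tau> ` {1..m})"
    and "\<forall>i\<in>{1..int N}. \<theta> (- i) = - \<theta> i"
  shows "\<forall>z::complex.
     det (z \<cdot>\<^sub>m 1\<^sub>m ((2*N+1)*(2*n)) - LN n m A B C D \<tau> \<xi> N \<theta>) = 0
     \<longleftrightarrow> det ((- cnj z) \<cdot>\<^sub>m 1\<^sub>m ((2*N+1)*(2*n)) - LN n m A B C D \<tau> \<xi> N \<theta>) = 0"
proof
  fix z :: complex
  have mono: "MONO N \<theta>" unfolding MONO_def using assms(14) .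
  have n: "n > 0" by fact
  have A0: "A 0 \<in> carrier_mat n n" using assms(5) by simp
  have Ak: "A k \<in> carrier_mat n n" if "k \<in> {1..m}" for k using assms(5) that by simp
  have xi: "\<xi> \<noteq> 0" using assms(11) by simp
  have neg: "Eig n m A B C D \<tau> \<xi> N \<theta> (- w)" if "Eig n m A B C D \<tau> \<xi> N \<theta> w" for w
  proof (cases "w = 0")
    case True
    thus ?thesis using that by simp
  next
    case False
    show ?thesis
      by (rule Eig_neg[OF mono n assms(15) assms(18) M0_ham[OF A0 assms(6,7,8) xi assms(12)]
            Mpm_ham(1)[OF Ak] Mpm_ham(2)[OF Ak] False that])
  qed
  have "det (z \<cdot>\<^sub>m 1\<^sub>m ((2*N+1)*(2*n)) - LN n m A B C D \<tau> \<xi> N \<theta>) = 0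
      \<longleftrightarrow> Eig n m A B C D \<tau> \<xi> N \<theta> z" by (rule det_iff_Eig[OF mono n])
  also have "\<dots> \<longleftrightarrow> Eig n m A B C D \<tau> \<xi> N \<theta> (- cnj z)"
  proof
    assume "Eig n m A B C D \<tau> \<xi> N \<theta> z"
    from Eig_cnj[OF mono neg[OF this]] show "Eig n m A B C D \<tau> \<xi> N \<theta> (- cnj z)" by simp
  next
    assume "Eig n m A B C D \<tau> \<xi> N \<theta> (- cnj z)"
    from neg[OF Eig_cnj[OF mono this]] show "Eig n m A B C D \<tau> \<xi> N \<theta> z" by simp
  qed
  also have "\<dots> \<longleftrightarrow> det ((- cnj z) \<cdot>\<^sub>m 1\<^sub>m ((2*N+1)*(2*n)) - LN n m A B C D \<tau> \<xi> N \<theta>) = 0"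
    by (rule det_iff_Eig[OF mono n, symmetric])
  finally show "det (z \<cdot>\<^sub>m 1\<^sub>m ((2*N+1)*(2*n)) - LN n m A B C D \<tau> \<xi> N \<theta>) = 0
     \<longleftrightarrow> det ((- cnj z) \<cdot>\<^sub>m 1\<^sub>m ((2*N+1)*(2*n)) - LN n m A B C D \<tau> \<xi> N \<theta>) = 0" .
qed

end
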